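(* Let $G$ be a (finite, simple) graph with $\operatorname{mad}(G) < 3$ and $\Delta(G) \leq 4$. Then $\chi'_{\mathrm{slist}}(G) \leq 3\Delta(G) + 1$.
   Context: $\Delta(G)$ denotes the maximum degree of $G$. The maximum average degree is $\operatorname{mad}(G) = \max_{H \subseteq G} \frac{2|E(H)|}{|V(H)|}$, the maximum over all (nonempty) subgraphs $H$ of $G$. A strong edge coloring of $G$ is an assignment of colors to the edges such that any two distinct edges $e_1 = uv$ and $e_2$ receive different colors whenever $e_2$ is incident with a vertex of $N_G(u) \cup N_G(v)$ (equivalently, a proper edge coloring in which every color class is an induced matching). A list assignment $L$ assigns to each edge $e$ a set $L(e)$ of colors; a strong edge coloring $c$ is an $L$-coloring if $c(e) \in L(e)$ for every edge $e$. The list strong chromatic index $\chi'_{\mathrm{slist}}(G)$ is the least $k$ such that for every list assignment $L$ with $|L(e)| \geq k$ for all edges $e$, $G$ has a strong edge $L$-coloring. *)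

theory Defs
  imports Main "HOL-Library.Cardinality" Complex_Main
begin

definition simple_graph :: "'a set \<Rightarrow> 'a set set \<Rightarrow> bool" where
  "simple_graph V E \<longleftrightarrow> finite V \<and>
     (\<forall>e\<in>E. \<exists>u v. u \<noteq> v \<and> u \<in> V \<and> v \<in> V \<and> e = {u, v})"

definition neighbors :: "'a set set \<Rightarrow> 'a \<Rightarrow> 'a set" where
  "neighbors E v = {u. {u, v} \<in> E}"

definition degree :: "'a set set \<Rightarrow> 'a \<Rightarrow> nat" where
  "degree E v = card (neighbors E v)"

definition max_degree :: "'a set \<Rightarrow> 'a set set \<Rightarrow> nat" where
  "max_degree V E = Max (insert 0 (degree E ` V))"

definition subgraph :: "'a set \<Rightarrow> 'a set set \<Rightarrow> 'a set \<Rightarrow> 'a set set \<Rightarrow> bool" where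
  "subgraph V' E' V E \<longleftrightarrow> V' \<subseteq> V \<and> E' \<subseteq> E \<and> (\<forall>e\<in>E'. e \<subseteq> V')"

definition mad :: "'a set \<Rightarrow> 'a set set \<Rightarrow> real" where
  "mad V E = Max {2 * real (card E') / real (card V') | V' E'.
                    subgraph V' E' V E \<and> V' \<noteq> {}}"

definition strong_edge_coloring :: "'a set set \<Rightarrow> ('a set \<Rightarrow> 'c) \<Rightarrow> bool" where
  "strong_edge_coloring E c \<longleftrightarrow>
     (\<forall>e1\<in>E. \<forall>e2\<in>E. e1 \<noteq> e2 \<and> (\<exists>x\<in>e1. \<exists>y\<in>e2. y \<in> neighbors E x) \<longrightarrow> c e1 \<noteq> c e2)"

definition L_coloring :: "'a set set \<Rightarrow> ('a set \<Rightarrow> 'c set) \<Rightarrow> ('a set \<Rightarrow> 'c) \<Rightarrow> bool" where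
  "L_coloring E L c \<longleftrightarrow> (\<forall>e\<in>E. c e \<in> L e)"

text \<open>Colours are natural numbers; lists are finite
  (card of an infinite set is 0 in Isabelle, so infinite lists are excluded, which is
  harmless since any infinite list contains a finite sublist of size k).\<close>
definition strong_list_colorable :: "'a set set \<Rightarrow> nat \<Rightarrow> bool" where
  "strong_list_colorable E k \<longleftrightarrow>
     (\<forall>L :: 'a set \<Rightarrow> nat set. (\<forall>e\<in>E. finite (L e) \<and> k \<le> card (L e)) \<longrightarrow>
        (\<exists>c. strong_edge_coloring E c \<and> L_coloring E L c))"

definition list_strong_chromatic_index :: "'a set set \<Rightarrow> nat" where
  "list_strong_chromatic_index E = (LEAST k. strong_list_colorable E k)"

end

theory Submission imports Defs begin

definition conf :: "'a set set \<Rightarrow> 'a set \<Rightarrow> 'a set \<Rightarrow> bool" where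
  "conf E e f \<longleftrightarrow> (\<exists>x\<in>e. \<exists>y\<in>f. y \<in> neighbors E x)"

definition cset :: "'a set set \<Rightarrow> 'a set set \<Rightarrow> 'a set \<Rightarrow> 'a set set" where
  "cset E S e = {f\<in>S. f \<noteq> e \<and> conf E e f}"

lemma conf_sym: "conf E e f = conf E f e"
  unfolding conf_def neighbors_def mem_Collect_eq by (metis insert_commute)

lemma color_ext:
  assumes finE: "finite E"
  and degen: "\<And>S. S \<subseteq> E \<Longrightarrow> S \<noteq> {} \<Longrightarrow> \<exists>e\<in>S. card (cset E S e) \<le> m"
  and L: "\<forall>e\<in>E. finite (L e) \<and> m+1 \<le> card (L e)"
  and SE: "S \<subseteq> E"
  shows "\<exists>c. (\<forall>e1\<in>S. \<forall>e2\<in>S. e1 \<noteq> e2 \<and> conf E e1 e2 \<longrightarrow> c e1 \<noteq> c e2) \<and> (\<forall>e\<in>S. c e \<in> L e)"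
proof -
  have "finite S" using finite_subset[OF SE finE] .
  then show ?thesis using SE
  proof (induction S rule: finite_psubset_induct)
    case (psubset A)
    show ?case
    proof (cases "A = {}")
      case True then show ?thesis by auto
    next
      case False
      then obtain e where eA: "e \<in> A" and ce: "card (cset E A e) \<le> m"
        using degen psubset.prems by blast
      have "A - {e} \<subset> A" using eA by auto
      then obtain c where c1: "\<forall>e1\<in>A-{e}. \<forall>e2\<in>A-{e}. e1 \<noteq> e2 \<and> conf E e1 e2 \<longrightarrow> c e1 \<noteq> c e2"
        and c2: "\<forall>f\<in>A-{e}. c f \<in> L f"
        using psubset.IH[of "A - {e}"] psubset.prems by blast
      have finc: "finite (cset E A e)" using psubset.hyps unfolding cset_def by auto
      have "card (c ` cset E A e) \<le> m" using card_image_le[OF finc, of c] ce by linarith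
      moreover have "m + 1 \<le> card (L e)" "finite (L e)" using L eA psubset.prems by auto
      ultimately have "\<not> L e \<subseteq> c ` cset E A e"
        using card_mono[of "c ` cset E A e" "L e"] finc by auto
      then obtain col where col: "col \<in> L e" "col \<notin> c ` cset E A e" by blast
      let ?c = "c(e := col)"
      have "\<forall>e1\<in>A. \<forall>e2\<in>A. e1 \<noteq> e2 \<and> conf E e1 e2 \<longrightarrow> ?c e1 \<noteq> ?c e2"
      proof (intro ballI impI)
        fix e1 e2 assume h: "e1 \<in> A" "e2 \<in> A" "e1 \<noteq> e2 \<and> conf E e1 e2"
        show "?c e1 \<noteq> ?c e2"
        proof (cases "e1 = e")
          case True
          then have "e2 \<in> cset E A e" using h unfolding cset_def by auto
          then show ?thesis using True h col by auto
        next
          case False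
          show ?thesis
          proof (cases "e2 = e")
            case True
            then have "e1 \<in> cset E A e" using h conf_sym[of E e1 e2] unfolding cset_def by auto
            then show ?thesis using True False col by auto
          next
            case False2: False
            then show ?thesis using c1 h False by auto
          qed
        qed
      qed
      moreover have "\<forall>f\<in>A. ?c f \<in> L f" using c2 col by auto
      ultimately show ?thesis by blast
    qed
  qed
qed

definition sdeg :: "'a set set \<Rightarrow> 'a \<Rightarrow> nat" where
  "sdeg S x = card {z. {z,x} \<in> S}"

definition NW :: "'a set set \<Rightarrow> 'a set set \<Rightarrow> 'a \<Rightarrow> 'a set" where
  "NW E S x = neighbors E x \<inter> \<Union>S"

context
  fixes V :: "'a set" and E :: "'a set set" and S :: "'a set set"
  assumes G: "simple_graph V E" and SE: "S \<subseteq> E"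
begin

lemma finV: "finite V" using G unfolding simple_graph_def by auto

lemma edgeE: "e \<in> E \<Longrightarrow> \<exists>u v. u \<noteq> v \<and> u \<in> V \<and> v \<in> V \<and> e = {u,v}"
  using G unfolding simple_graph_def by auto

lemma finE: "finite E"
proof -
  have "E \<subseteq> Pow V" using edgeE by blast
  then show ?thesis using finite_subset[of E "Pow V"] finV by simp
qed

lemma finS: "finite S" using finite_subset[OF SE finE] .

lemma nb_V: "neighbors E x \<subseteq> V"
  unfolding neighbors_def using edgeE by (auto simp: doubleton_eq_iff) (metis doubleton_eq_iff)

lemma fin_nb: "finite (neighbors E x)" using finite_subset[OF nb_V finV] .

lemma nb_sym: "y \<in> neighbors E x \<longleftrightarrow> x \<in> neighbors E y"
  unfolding neighbors_def by (simp add: insert_commute)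

lemma nb_irr: "x \<notin> neighbors E x"
  unfolding neighbors_def using edgeE by fastforce

lemma in_W: "x \<in> \<Union>S \<longleftrightarrow> (\<exists>z. {z,x} \<in> S)"
proof
  assume "x \<in> \<Union>S"
  then obtain f where f: "f \<in> S" "x \<in> f" by blast
  then obtain a b where "f = {a,b}" using edgeE SE by blast
  then show "\<exists>z. {z,x} \<in> S" using f by (auto simp: insert_commute)
qed auto

lemma SN_NW: "{z. {z,x} \<in> S} \<subseteq> NW E S x"
  unfolding NW_def neighbors_def using SE in_W by (auto simp: insert_commute)

lemma fin_NW: "finite (NW E S x)" unfolding NW_def using fin_nb by auto

lemma sdeg_le: "sdeg S x \<le> card (NW E S x)"
  unfolding sdeg_def using SN_NW fin_NW card_mono by blast

lemma sdeg_le2: "{u,x} \<notin> S \<Longrightarrow> sdeg S x \<le> card (NW E S x - {u})"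
proof -
  assume a: "{u,x} \<notin> S"
  have "{z. {z,x} \<in> S} \<subseteq> NW E S x - {u}" using SN_NW[of x] a by blast
  then show ?thesis unfolding sdeg_def by (simp add: card_mono fin_NW)
qed

lemma Sx_eq: "{f\<in>S. y \<in> f} = (\<lambda>z. {z,y}) ` {z. {z,y} \<in> S}"
proof
  show "{f\<in>S. y \<in> f} \<subseteq> (\<lambda>z. {z,y}) ` {z. {z,y} \<in> S}"
  proof
    fix f assume "f \<in> {f\<in>S. y \<in> f}"
    then have f: "f \<in> S" "y \<in> f" by auto
    then obtain a b where "f = {a,b}" using edgeE SE by blast
    then have "f = {if a = y then b else a, y}" using f by auto
    then show "f \<in> (\<lambda>z. {z,y}) ` {z. {z,y} \<in> S}" using f by force
  qed
qed auto

lemma card_Sx: "card {f\<in>S. y \<in> f} = sdeg S y"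
proof -
  have "inj_on (\<lambda>z. {z,y}) {z. {z,y} \<in> S}"
    by (auto simp: inj_on_def doubleton_eq_iff)
  then show ?thesis unfolding Sx_eq sdeg_def by (rule card_image)
qed

lemma cover:
  assumes uv: "{u,v} \<in> S"
  shows "cset E S {u,v} \<subseteq> (\<Union>y\<in>NW E S v - {u}. {f\<in>S. y \<in> f}) \<union> (\<Union>y\<in>NW E S u - {v}. {f\<in>S. y \<in> f})"
proof
  fix f assume "f \<in> cset E S {u,v}"
  then have f: "f \<in> S" "f \<noteq> {u,v}" and "conf E {u,v} f" unfolding cset_def by auto
  then obtain a b where ab: "a \<in> {u,v}" "b \<in> f" "b \<in> neighbors E a" unfolding conf_def by blast
  obtain p q where pq: "p \<noteq> q" "f = {p,q}" using edgeE SE f by blast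
  obtain c where c: "f = {b,c}" "b \<noteq> c" using pq ab by auto
  have bW: "b \<in> \<Union>S" using f ab by blast
  have cW: "c \<in> \<Union>S" using f c by blast
  have cb: "c \<in> neighbors E b" "b \<in> neighbors E c"
    using f c SE unfolding neighbors_def by (auto simp: insert_commute)
  have uv_ne: "u \<noteq> v" using uv edgeE SE by fastforce
  show "f \<in> (\<Union>y\<in>NW E S v - {u}. {f\<in>S. y \<in> f}) \<union> (\<Union>y\<in>NW E S u - {v}. {f\<in>S. y \<in> f})"
  proof (cases "a = u")
    case True
    show ?thesis
    proof (cases "b = v")
      case True
      then have "c \<noteq> u" using c f by (auto simp: insert_commute)
      then have "c \<in> NW E S v - {u}" using cb True cW unfolding NW_def by auto
      then show ?thesis using f c by auto
    next
      case False
      then have "b \<in> NW E S u - {v}" using ab True bW unfolding NW_def by auto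
      then show ?thesis using f ab by auto
    qed
  next
    case False
    then have av: "a = v" using ab by auto
    show ?thesis
    proof (cases "b = u")
      case True
      then have "c \<noteq> v" using c f by (auto simp: insert_commute)
      then have "c \<in> NW E S u - {v}" using cb True cW unfolding NW_def by auto
      then show ?thesis using f c by auto
    next
      case False
      then have "b \<in> NW E S v - {u}" using ab av bW unfolding NW_def by auto
      then show ?thesis using f ab by auto
    qed
  qed
qed

lemma cset_bound:
  assumes uv: "{u,v} \<in> S"
  shows "card (cset E S {u,v}) \<le> (\<Sum>y\<in>NW E S v - {u}. sdeg S y) + (\<Sum>y\<in>NW E S u - {v}. sdeg S y)"
proof -
  let ?A = "(\<Union>y\<in>NW E S v - {u}. {f\<in>S. y \<in> f})"
  let ?B = "(\<Union>y\<in>NW E S u - {v}. {f\<in>S. y \<in> f})"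
  have "card (cset E S {u,v}) \<le> card (?A \<union> ?B)"
  proof (rule card_mono)
    have "?A \<union> ?B \<subseteq> S" by auto
    then show "finite (?A \<union> ?B)" using finite_subset[OF _ finS] by simp
  qed (rule cover[OF uv])
  also have "\<dots> \<le> card ?A + card ?B" by (rule card_Un_le)
  also have "card ?A \<le> (\<Sum>y\<in>NW E S v - {u}. card {f\<in>S. y \<in> f})" by (rule card_UN_le) (use fin_NW in auto)
  also have "card ?B \<le> (\<Sum>y\<in>NW E S u - {v}. card {f\<in>S. y \<in> f})" by (rule card_UN_le) (use fin_NW in auto)
  finally show ?thesis by (simp add: card_Sx)
qed

lemma nb_le_D: "card (neighbors E x) \<le> max_degree V E"
proof (cases "x \<in> V")
  case True
  then show ?thesis unfolding max_degree_def degree_def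
    by (intro Max_ge) (auto simp: finV)
next
  case False
  then have "neighbors E x = {}" using nb_V nb_sym by blast
  then show ?thesis by simp
qed

lemma NW_le_D: "card (NW E S x) \<le> max_degree V E"
  using nb_le_D[of x] card_mono[OF fin_nb, of "NW E S x" x] unfolding NW_def by auto

lemma handshake:
  assumes WV: "W \<subseteq> V"
  shows "(\<Sum>x\<in>W. card (neighbors E x \<inter> W)) = 2 * card {e\<in>E. e \<subseteq> W}"
proof -
  let ?E = "{e\<in>E. e \<subseteq> W}"
  have finW: "finite W" using finite_subset[OF WV finV] .
  have finE': "finite ?E" using finE by auto
  have eq1: "\<And>x. x \<in> W \<Longrightarrow> neighbors E x \<inter> W = {z. {z,x} \<in> ?E}"
    unfolding neighbors_def by auto
  have "(\<Sum>x\<in>W. card (neighbors E x \<inter> W)) = (\<Sum>x\<in>W. card {z. {z,x} \<in> ?E})"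
    using eq1 by simp
  also have "\<dots> = card (SIGMA x:W. {z. {z,x} \<in> ?E})"
    by (rule card_SigmaI[symmetric]) (use finW in simp, intro ballI, rule finite_subset[OF _ fin_nb], auto simp: neighbors_def)
  also have "(SIGMA x:W. {z. {z,x} \<in> ?E}) = (\<Union>e\<in>?E. {(x,z). {z,x} = e})"
    by auto
  also have "card \<dots> = (\<Sum>e\<in>?E. card {(x,z). {z,x} = e})"
  proof (rule card_UN_disjoint[OF finE'])
    show "\<forall>e\<in>?E. finite {(x, z). {z, x} = e}"
    proof
      fix e assume "e \<in> ?E"
      then obtain a b where "a \<noteq> b" "e = {a,b}" using edgeE by blast
      then have "{(x, z). {z, x} = e} = {(a,b),(b,a)}" by (auto simp: doubleton_eq_iff)
      then show "finite {(x, z). {z, x} = e}" by simp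
    qed
  qed auto
  also have "\<dots> = (\<Sum>e\<in>?E. 2)"
  proof (rule sum.cong)
    fix e assume "e \<in> ?E"
    then obtain a b where ab: "a \<noteq> b" "e = {a,b}" using edgeE by blast
    then have "{(x, z). {z, x} = e} = {(a,b),(b,a)}" by (auto simp: doubleton_eq_iff)
    then show "card {(x, z). {z, x} = e} = 2" using ab by simp
  qed simp
  finally show ?thesis by simp
qed

lemma mad_bound:
  assumes mad: "mad V E < 3" and WV: "W \<subseteq> V" and Wne: "W \<noteq> {}"
  shows "(\<Sum>x\<in>W. card (neighbors E x \<inter> W)) < 3 * card W"
proof -
  let ?E = "{e\<in>E. e \<subseteq> W}"
  let ?M = "{2 * real (card E') / real (card V') | V' E'. subgraph V' E' V E \<and> V' \<noteq> {}}"
  have finW: "finite W" using finite_subset[OF WV finV] .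
  have "?M \<subseteq> (\<lambda>(A,B). 2 * real (card B) / real (card A)) ` (Pow V \<times> Pow E)"
    unfolding subgraph_def by auto
  then have finM: "finite ?M" by (rule finite_subset) (intro finite_imageI finite_cartesian_product, use finV finE in simp_all)
  have sg: "subgraph W ?E V E" unfolding subgraph_def using WV by auto
  then have "2 * real (card ?E) / real (card W) \<in> ?M" using Wne by blast
  then have "2 * real (card ?E) / real (card W) \<le> mad V E" unfolding mad_def
    using finM by (intro Max_ge) auto
  then have "2 * real (card ?E) / real (card W) < 3" using mad by linarith
  moreover have "card W > 0" using finW Wne by (simp add: card_gt_0_iff)
  ultimately have "2 * real (card ?E) < 3 * real (card W)" by (simp add: divide_less_eq)
  then have "2 * card ?E < 3 * card W" by linarith
  then show ?thesis using handshake[OF WV] by simp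
qed

lemma WV: "\<Union>S \<subseteq> V" using SE edgeE by blast

lemma NW_W: "NW E S x \<subseteq> \<Union>S" unfolding NW_def by auto

lemma NW_sym: "x \<in> \<Union>S \<Longrightarrow> y \<in> \<Union>S \<Longrightarrow> y \<in> NW E S x \<longleftrightarrow> x \<in> NW E S y"
  unfolding NW_def using nb_sym by blast

lemma NW_irr: "x \<notin> NW E S x" unfolding NW_def using nb_irr by blast

lemma Sedge: "{x,z} \<in> S \<Longrightarrow> z \<in> NW E S x \<and> x \<in> NW E S z \<and> x \<in> \<Union>S \<and> z \<in> \<Union>S"
proof -
  assume a: "{x,z} \<in> S"
  then have "{x,z} \<in> E" "{z,x} \<in> E" using SE by (auto simp: insert_commute)
  moreover have "x \<in> \<Union>S" "z \<in> \<Union>S" using a by auto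
  ultimately show ?thesis unfolding NW_def neighbors_def by auto
qed

lemma sdeg_pos: "x \<in> \<Union>S \<Longrightarrow> 1 \<le> sdeg S x"
proof -
  assume "x \<in> \<Union>S"
  then obtain z where "{z,x} \<in> S" using in_W by blast
  moreover have "finite {z. {z,x} \<in> S}" using finite_subset[OF SN_NW fin_NW] .
  ultimately show ?thesis unfolding sdeg_def by (auto simp: card_gt_0_iff Suc_le_eq)
qed

lemma sum_split_bound:
  assumes A: "A \<subseteq> \<Union>S" and D4: "max_degree V E \<le> 4"
  shows "(\<Sum>y\<in>A. sdeg S y) + 2 * card (A \<inter> {x\<in>\<Union>S. card (NW E S x) = 2}) \<le> 4 * card A"
proof -
  let ?W2 = "{x\<in>\<Union>S. card (NW E S x) = 2}"
  have finA: "finite A" using finite_subset[OF A finite_subset[OF WV finV]] .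
  have "(\<Sum>y\<in>A. sdeg S y) \<le> (\<Sum>y\<in>A. if y \<in> ?W2 then 2 else 4)"
  proof (rule sum_mono)
    fix y assume "y \<in> A"
    have "sdeg S y \<le> card (NW E S y)" "card (NW E S y) \<le> 4"
      using sdeg_le[of y] NW_le_D[of y] D4 by linarith+
    then show "sdeg S y \<le> (if y \<in> ?W2 then 2 else 4)"
      by (cases "y \<in> ?W2") simp_all
  qed
  moreover have "(\<Sum>y\<in>A. if y \<in> ?W2 then 2 else 4) + (\<Sum>y\<in>A. if y \<in> ?W2 then 2 else 0) = (\<Sum>y\<in>A. (4::nat))"
  proof -
    have "(\<Sum>y\<in>A. if y \<in> ?W2 then 2 else 4) + (\<Sum>y\<in>A. if y \<in> ?W2 then 2 else 0) = 
      (\<Sum>y\<in>A. (if y \<in> ?W2 then 2 else 4) + (if y \<in> ?W2 then 2 else 0))"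
      by (rule sum.distrib[symmetric])
    also have "\<dots> = (\<Sum>y\<in>A. (4::nat))"
      by (rule sum.cong) simp_all
    finally show ?thesis .
  qed
  moreover have "(\<Sum>y\<in>A. if y \<in> ?W2 then 2 else 0) = (\<Sum>y\<in>A \<inter> ?W2. (2::nat))"
    by (rule sum.inter_restrict[symmetric, OF finA])
  ultimately show ?thesis by simp
qed

lemma degen_main:
  assumes mad: "mad V E < 3" and D4: "max_degree V E \<le> 4" and Sne: "S \<noteq> {}"
  shows "\<exists>e\<in>S. card (cset E S e) \<le> 3 * max_degree V E"
proof (rule ccontr)
  assume "\<not> ?thesis"
  then have H: "\<And>e. e \<in> S \<Longrightarrow> 3 * max_degree V E < card (cset E S e)" by force
  define D where "D = max_degree V E"
  define W where "W = \<Union>S"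
  define g where "g x = card (NW E S x)" for x
  have gD: "g x \<le> D" for x unfolding g_def D_def by (rule NW_le_D)
  have D4': "D \<le> 4" using D4 D_def by simp
  have finW: "finite W" using finite_subset[OF WV finV] W_def by simp
  have Wne: "W \<noteq> {}" using Sne SE edgeE W_def by fastforce
  have sdegD: "sdeg S y \<le> D" for y using sdeg_le[of y] gD[of y] g_def by simp
  have sumD: "(\<Sum>y\<in>A. sdeg S y) \<le> card A * D" for A
    using sum_bounded_above[of A "sdeg S" D] sdegD by simp
  have key: "3 * D < (\<Sum>y\<in>NW E S v - {u}. sdeg S y) + (\<Sum>y\<in>NW E S u - {v}. sdeg S y)"
    if "{u,v} \<in> S" for u v
    using H[OF that] cset_bound[OF that] D_def by linarith
  have cardm1: "card (NW E S v - {u}) = g v - 1" if "u \<in> NW E S v" for u v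
    using that fin_NW g_def by simp
  have g2: "2 \<le> g x" if xW: "x \<in> W" for x
  proof (rule ccontr)
    assume "\<not> 2 \<le> g x"
    obtain z where z: "{z,x} \<in> S" using in_W xW W_def by blast
    then have zx: "{x,z} \<in> S" by (simp add: insert_commute)
    have zN: "z \<in> NW E S x" "x \<in> NW E S z" using Sedge[OF zx] by auto
    have "g x \<ge> 1" using zN fin_NW[of x] g_def by (auto simp: card_gt_0_iff Suc_le_eq)
    then have "g x = 1" using \<open>\<not> 2 \<le> g x\<close> by simp
    then have "NW E S x = {z}" using zN g_def by (metis card_1_singletonE singletonD)
    then have s0: "(\<Sum>y\<in>NW E S x - {z}. sdeg S y) = 0" by simp
    have "(\<Sum>y\<in>NW E S z - {x}. sdeg S y) \<le> (g z - 1) * D" using sumD cardm1[OF zN(2)] by metis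
    also have "\<dots> \<le> (D - 1) * D" by (intro mult_le_mono1 diff_le_mono) (rule gD)
    finally have "3 * D < (D - 1) * D" using key[OF zx] s0 by linarith
    moreover have "D \<in> {0,1,2,3,4}" using D4' by auto
    ultimately show False by auto
  qed
  have two_nb: "\<exists>v w. NW E S x = {v,w} \<and> v \<noteq> w \<and> {x,v} \<in> S" if xW: "x \<in> W" and gx: "g x = 2" for x
  proof -
    obtain a b where ab: "NW E S x = {a,b}" "a \<noteq> b" using gx g_def card_2_iff by metis
    obtain z where z: "{z,x} \<in> S" using in_W xW W_def by blast
    then have zx: "{x,z} \<in> S" by (simp add: insert_commute)
    then have "z \<in> {a,b}" using Sedge[OF zx] ab by auto
    then show ?thesis
    proof
      assume "z = a" then show ?thesis using ab zx by blast
    next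
      assume "z \<in> {b}" then show ?thesis using ab zx by (intro exI[of _ b] exI[of _ a]) auto
    qed
  qed
  have sum_single: "(\<Sum>y\<in>NW E S x - {v}. sdeg S y) = sdeg S w" if "NW E S x = {v,w}" "v \<noteq> w" for x v w
  proof -
    have "NW E S x - {v} = {w}" using that by auto
    then show ?thesis by simp
  qed
  have gsum: "(\<Sum>x\<in>W. g x) < 3 * card W"
    using mad_bound[OF mad, of W] WV Wne W_def g_def unfolding NW_def by simp
  show False
  proof (cases "D \<le> 3")
    case True
    have g3: "3 \<le> g x" if xW: "x \<in> W" for x
    proof (rule ccontr)
      assume "\<not> 3 \<le> g x"
      then have "g x = 2" using g2[OF xW] by simp
      then obtain v w where vw: "NW E S x = {v,w}" "v \<noteq> w" "{x,v} \<in> S" using two_nb xW by blast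
      have vN: "x \<in> NW E S v" using Sedge[OF vw(3)] by auto
      have "(\<Sum>y\<in>NW E S v - {x}. sdeg S y) \<le> (g v - 1) * D" using sumD cardm1[OF vN] by metis
      also have "\<dots> \<le> (D - 1) * D" by (intro mult_le_mono1 diff_le_mono) (rule gD)
      finally have "3 * D < (D - 1) * D + D" using key[OF vw(3)] sum_single[OF vw(1,2)] sdegD[of w] by linarith
      moreover have "D \<in> {0,1,2,3}" using True by auto
      ultimately show False by auto
    qed
    have "(\<Sum>x\<in>W. 3) \<le> (\<Sum>x\<in>W. g x)" by (rule sum_mono) (use g3 in auto)
    then show False using gsum by simp
  next
    case False
    then have D4e: "D = 4" using D4' by simp
    define W2 where "W2 = {x\<in>W. g x = 2}"
    define W4 where "W4 = {x\<in>W. g x = 4}"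
    define k where "k v = card (NW E S v \<inter> W2)" for v
    define wt where "wt v = (if k v = 1 then 2 else if k v = 2 then 1 else (0::nat))" for v
    have finW2: "finite W2" "finite W4" using finW W2_def W4_def by auto
    have W2eq: "W2 = {x\<in>\<Union>S. card (NW E S x) = 2}" using W2_def W_def g_def by simp
    have loc: "v \<in> W4 \<and> k v \<le> 2 \<and> (k v = 2 \<longrightarrow> 3 \<le> sdeg S w)"
      if xW2: "x \<in> W2" and vw: "NW E S x = {v,w}" "v \<noteq> w" "{x,v} \<in> S" for x v w
    proof -
      define A where "A = NW E S v - {x}"
      have vN: "x \<in> NW E S v" and vW: "v \<in> W" using Sedge[OF vw(3)] W_def by auto
      have cA: "card A = g v - 1" using cardm1[OF vN] A_def by simp
      have AW: "A \<subseteq> \<Union>S" using NW_W A_def by auto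
      have spl: "(\<Sum>y\<in>A. sdeg S y) + 2 * card (A \<inter> W2) \<le> 4 * card A"
        using sum_split_bound[OF AW D4] W2eq by simp
      have k1: "k v = card (A \<inter> W2) + 1"
      proof -
        have "NW E S v \<inter> W2 = insert x (A \<inter> W2)" using vN xW2 A_def by auto
        moreover have "x \<notin> A \<inter> W2" using A_def by auto
        moreover have "finite (A \<inter> W2)" using finW2 by simp
        ultimately show ?thesis unfolding k_def by simp
      qed
      have kk: "12 < (\<Sum>y\<in>A. sdeg S y) + sdeg S w"
        using key[OF vw(3)] sum_single[OF vw(1,2)] D4e A_def by simp
      have gv4: "g v \<le> 4" using gD[of v] D4e by simp
      have sw: "sdeg S w \<le> 4" using sdegD[of w] D4e by simp
      have "g v = 4" using kk spl cA gv4 sw by linarith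
      moreover have "k v \<le> 2" using kk spl cA gv4 sw k1 by linarith
      moreover have "k v = 2 \<longrightarrow> 3 \<le> sdeg S w" using kk spl cA gv4 sw k1 by linarith
      ultimately show ?thesis using vW W4_def by simp
    qed
    have kpos: "1 \<le> k v" if "u \<in> W2" "u \<in> NW E S v" for u v
    proof -
      have "finite (NW E S v \<inter> W2)" using fin_NW by simp
      then show ?thesis using that unfolding k_def by (auto simp: card_gt_0_iff Suc_le_eq)
    qed
    have recv: "2 \<le> (\<Sum>v\<in>NW E S u \<inter> W4. wt v)" if uW2: "u \<in> W2" for u
    proof -
      have uW: "u \<in> W" "g u = 2" using uW2 W2_def by auto
      obtain v w where vw: "NW E S u = {v,w}" "v \<noteq> w" "{u,v} \<in> S" using two_nb uW by blast
      have vw': "NW E S u = {w,v}" "w \<noteq> v" using vw by auto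
      have lv: "v \<in> W4" "k v \<le> 2" "k v = 2 \<longrightarrow> 3 \<le> sdeg S w" using loc[OF uW2 vw] by auto
      have kv1: "1 \<le> k v" using kpos[OF uW2] Sedge[OF vw(3)] by auto
      have fin: "finite (NW E S u \<inter> W4)" using fin_NW by simp
      show ?thesis
      proof (cases "k v = 1")
        case True
        then have "wt v = 2" using wt_def by simp
        moreover have "wt v \<le> (\<Sum>v\<in>NW E S u \<inter> W4. wt v)"
          by (rule member_le_sum) (use vw lv fin in auto)
        ultimately show ?thesis by simp
      next
        case False
        then have kv2: "k v = 2" using lv kv1 by simp
        then have wtv: "wt v = 1" using wt_def by simp
        have sw3: "3 \<le> sdeg S w" using lv kv2 by simp
        have wW4: "w \<in> W4 \<and> 1 \<le> wt w"
        proof (cases "{u,w} \<in> S")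
          case True
          have "w \<in> W4" "k w \<le> 2" using loc[OF uW2 vw'(1,2) True] by auto
          moreover have "1 \<le> k w" using kpos[OF uW2] Sedge[OF True] by auto
          ultimately show ?thesis using wt_def by auto
        next
          case False
          have wW: "w \<in> W" using vw(1) NW_W[of u] W_def by auto
          have uNw: "u \<in> NW E S w" using NW_sym[of u w] wW uW(1) vw(1) W_def by auto
          have "sdeg S w \<le> card (NW E S w - {u})" using sdeg_le2[OF False] .
          also have "\<dots> = g w - 1" using cardm1[OF uNw] .
          finally have "sdeg S w \<le> g w - 1" .
          then have gw: "g w = 4" and sw: "sdeg S w = 3" using sw3 gD[of w] D4e by linarith+
          have SNeq: "{z. {z,w} \<in> S} = NW E S w - {u}"
          proof (rule card_subset_eq)
            show "finite (NW E S w - {u})" using fin_NW by simp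
            show "{z. {z,w} \<in> S} \<subseteq> NW E S w - {u}" using SN_NW[of w] False by (auto simp: insert_commute)
            show "card {z. {z,w} \<in> S} = card (NW E S w - {u})"
              using sw gw cardm1[OF uNw] unfolding sdeg_def by simp
          qed
          have "k w \<le> 2"
          proof (cases "\<exists>a. a \<in> NW E S w \<inter> W2 \<and> a \<noteq> u")
            case True
            then obtain a where a: "a \<in> NW E S w" "a \<in> W2" "a \<noteq> u" by blast
            then have aw: "{a,w} \<in> S" using SNeq by auto
            have aW: "a \<in> W" "g a = 2" using a W2_def by auto
            obtain p q where pq: "NW E S a = {p,q}" "p \<noteq> q" "{a,p} \<in> S" using two_nb aW by blast
            have "w \<in> {p,q}" using Sedge[OF aw] pq by auto
            then show ?thesis
            proof
              assume "w = p" then show ?thesis using loc[OF a(2) pq] by simp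
            next
              assume "w \<in> {q}"
              then have "w = q" by simp
              have "NW E S a = {q,p}" "q \<noteq> p" using pq by auto
              moreover have "{a,q} \<in> S" using aw \<open>w = q\<close> by simp
              ultimately show ?thesis using loc[OF a(2)] \<open>w = q\<close> by blast
            qed
          next
            case False
            then have "NW E S w \<inter> W2 \<subseteq> {u}" by auto
            then have "k w \<le> 1" unfolding k_def using card_mono[of "{u}"] by fastforce
            then show ?thesis by simp
          qed
          moreover have "1 \<le> k w" using kpos[OF uW2 uNw] .
          ultimately show ?thesis using wt_def gw wW W4_def by auto
        qed
        have "NW E S u \<inter> W4 = {v,w}" using vw lv wW4 by auto
        then have "(\<Sum>v\<in>NW E S u \<inter> W4. wt v) = wt v + wt w" using vw by simp
        then show ?thesis using wtv wW4 by simp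
      qed
    qed
    have give: "k v * wt v \<le> 2" for v unfolding wt_def by auto
    have "(\<Sum>u\<in>W2. 2) \<le> (\<Sum>u\<in>W2. \<Sum>v\<in>NW E S u \<inter> W4. wt v)"
      by (rule sum_mono) (use recv in auto)
    also have "\<dots> = (\<Sum>u\<in>W2. \<Sum>v\<in>{v. v \<in> W4 \<and> v \<in> NW E S u}. wt v)"
      by (rule sum.cong) (auto intro: sum.cong)
    also have "\<dots> = (\<Sum>v\<in>W4. \<Sum>u\<in>{u. u \<in> W2 \<and> v \<in> NW E S u}. wt v)"
      by (rule sum.swap_restrict) (use finW2 in auto)
    also have "\<dots> = (\<Sum>v\<in>W4. k v * wt v)"
    proof (rule sum.cong)
      fix v assume vW4: "v \<in> W4"
      have "{u. u \<in> W2 \<and> v \<in> NW E S u} = NW E S v \<inter> W2"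
        using vW4 NW_sym W2_def W4_def W_def by auto
      then show "(\<Sum>u\<in>{u. u \<in> W2 \<and> v \<in> NW E S u}. wt v) = k v * wt v"
        unfolding k_def by simp
    qed simp
    also have "\<dots> \<le> (\<Sum>v\<in>W4. 2)" by (rule sum_mono) (rule give)
    finally have c24: "card W2 \<le> card W4" by simp
    have pt: "3 + (if x \<in> W4 then 1 else 0) \<le> g x + (if x \<in> W2 then 1 else 0)" if "x \<in> W" for x
      using g2[OF that] gD[of x] D4e W2_def W4_def that by auto
    have "(\<Sum>x\<in>W. 3 + (if x \<in> W4 then 1 else 0)) \<le> (\<Sum>x\<in>W. g x + (if x \<in> W2 then 1 else 0))"
      by (rule sum_mono) (rule pt)
    moreover have "(\<Sum>x\<in>W. (if x \<in> W4 then 1 else 0)) = card W4"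
      using sum.inter_restrict[OF finW, of "\<lambda>_. 1::nat" W4, symmetric] W4_def by (simp add: Int_absorb1)
    moreover have "(\<Sum>x\<in>W. (if x \<in> W2 then 1 else 0)) = card W2"
      using sum.inter_restrict[OF finW, of "\<lambda>_. 1::nat" W2, symmetric] W2_def by (simp add: Int_absorb1)
    ultimately have "3 * card W + card W4 \<le> (\<Sum>x\<in>W. g x) + card W2"
      by (simp add: sum.distrib)
    then show False using gsum c24 by linarith
  qed
qed

end


theorem theorem2p1:
  fixes V :: "'a set" and E :: "'a set set"
  assumes "simple_graph V E"
    and "mad V E < 3"
    and "max_degree V E \<le> 4"
  shows "list_strong_chromatic_index E \<le> 3 * max_degree V E + 1"
proof -
  have "strong_list_colorable E (3 * max_degree V E + 1)"
    unfolding strong_list_colorable_def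
  proof (intro allI impI)
    fix L :: "'a set \<Rightarrow> nat set"
    assume L: "\<forall>e\<in>E. finite (L e) \<and> 3 * max_degree V E + 1 \<le> card (L e)"
    have degen: "\<And>S. S \<subseteq> E \<Longrightarrow> S \<noteq> {} \<Longrightarrow> \<exists>e\<in>S. card (cset E S e) \<le> 3 * max_degree V E"
      using degen_main[OF assms(1) _ assms(2) assms(3)] by blast
    have fE: "finite E" using finE[OF assms(1) subset_refl] .
    obtain c where c: "\<forall>e1\<in>E. \<forall>e2\<in>E. e1 \<noteq> e2 \<and> conf E e1 e2 \<longrightarrow> c e1 \<noteq> c e2" "\<forall>e\<in>E. c e \<in> L e"
      using color_ext[OF fE degen L subset_refl] by blast
    then show "\<exists>c. strong_edge_coloring E c \<and> L_coloring E L c"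
      unfolding strong_edge_coloring_def L_coloring_def conf_def by blast
  qed
  then show ?thesis unfolding list_strong_chromatic_index_def by (rule Least_le)
qed

end
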